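(* Let $\mathscr{A}=\{a,b\}$, let $S$ be the Fibonacci substitution $a\mapsto ab$, $b\mapsto a$, and let $\Xi$ be the associated Fibonacci subshift. For $k\in\mathbb{N}$ let $\eta^a_k=(S^k(a))^\infty$ and $\eta^b_k=(S^k(b))^\infty$ and let $\Xi^a_k=\mathrm{Orb}(\eta^a_k)$, $\Xi^b_k=\mathrm{Orb}(\eta^b_k)$. Then $\Xi$ is periodically approximable and both sequences $(\Xi^a_k)_k$ and $(\Xi^b_k)_k$ converge to $\Xi$ in the Hausdorff topology.
   Context: $S$ extends to finite words as a homomorphism for concatenation. The Fibonacci subshift is $\Xi=\{\xi\in\mathscr{A}^{\mathbb{Z}}:\text{every finite subword of }\xi\text{ is a subword of some }S^n(c),\ n\in\mathbb{N},\ c\in\mathscr{A}\}$. For a finite word $u$, $u^\infty$ is the two-sided periodic sequence repeating $u$. $\mathscr{A}^{\mathbb{Z}}$ has the product topology and shift $(T\xi)(j)=\xi(j-1)$, $\mathrm{Orb}(\eta)=\{T^n\eta:n\in\mathbb{Z}\}$. Subshifts (non-empty closed $T$-invariant subsets) carry the Hausdorff (Vietoris) topology (basis: $\{\Xi:\Xi\cap F=\emptyset,\Xi\cap O\neq\emptyset\ \forall O\in\mathcal{F}\}$, $F$ closed, $\mathcal{F}$ a finite family of open sets). Periodically approximable means being a limit of subshifts $\mathrm{Orb}(\eta)$ with $\eta$ periodic. *)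

theory Defs
  imports "HOL-Analysis.Analysis" "HOL-Library.Sublist"
begin

datatype letter = La | Lb

type_synonym config = "int \<Rightarrow> letter"

fun fib_sub :: "letter \<Rightarrow> letter list" where
  "fib_sub La = [La, Lb]"
| "fib_sub Lb = [La]"

definition fib_word :: "letter list \<Rightarrow> letter list" where
  "fib_word w = concat (map fib_sub w)"

abbreviation fib_iter :: "nat \<Rightarrow> letter list \<Rightarrow> letter list" where
  "fib_iter n w \<equiv> (fib_word ^^ n) w"

definition subword_at :: "config \<Rightarrow> int \<Rightarrow> nat \<Rightarrow> letter list" where
  "subword_at \<xi> m n = map (\<lambda>i. \<xi> (m + int i)) [0..<n]"

definition Fib_subshift :: "config set" where
  "Fib_subshift = {\<xi>. \<forall>m n. \<exists>k c. sublist (subword_at \<xi> m n) (fib_iter k [c])}"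

definition per_word :: "letter list \<Rightarrow> config" where
  "per_word u = (\<lambda>j. u ! nat (j mod int (length u)))"

definition shift :: "config \<Rightarrow> config" where
  "shift \<xi> = (\<lambda>j. \<xi> (j - 1))"

definition shift_pow :: "int \<Rightarrow> config \<Rightarrow> config" where
  "shift_pow n \<xi> = (\<lambda>j. \<xi> (j - n))"

definition Orb :: "config \<Rightarrow> config set" where
  "Orb \<eta> = range (\<lambda>n. shift_pow n \<eta>)"

definition periodic_config :: "config \<Rightarrow> bool" where
  "periodic_config \<eta> \<longleftrightarrow> (\<exists>p::int. p > 0 \<and> (\<forall>j. \<eta> (j + p) = \<eta> j))"

definition config_top :: "config topology" where
  "config_top = product_topology (\<lambda>_. discrete_topology UNIV) UNIV"

definition is_subshift :: "config set \<Rightarrow> bool" where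
  "is_subshift X \<longleftrightarrow> X \<noteq> {} \<and> closedin config_top X \<and> shift ` X = X"

text \<open>Hausdorff (Vietoris) topology on the set of subshifts, generated by the basis sets.\<close>
definition vietoris_basis :: "config set set set" where
  "vietoris_basis = {{X. is_subshift X \<and> X \<inter> F = {} \<and> (\<forall>U\<in>Us. X \<inter> U \<noteq> {})} | F Us.
      closedin config_top F \<and> finite Us \<and> (\<forall>U\<in>Us. openin config_top U)}"

definition vietoris_top :: "config set topology" where
  "vietoris_top = topology_generated_by vietoris_basis"

definition periodically_approximable :: "config set \<Rightarrow> bool" where
  "periodically_approximable X \<longleftrightarrow>
     (\<exists>\<eta> :: nat \<Rightarrow> config. (\<forall>n. periodic_config (\<eta> n)) \<and>
        limitin vietoris_top (\<lambda>n. Orb (\<eta> n)) X sequentially)"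

end

theory Submission
  imports Defs
begin

lemma fib_word_append[simp]: "fib_word (xs @ ys) = fib_word xs @ fib_word ys"
  by (simp add: fib_word_def)

lemma fib_iter_append: "fib_iter k (xs @ ys) = fib_iter k xs @ fib_iter k ys"
  by (induction k) auto

lemma fib_iter_Suc: "fib_iter (Suc k) w = fib_iter k (fib_word w)"
  by (simp only: funpow_Suc_right comp_def)

lemma fib_iter_Suc_La: "fib_iter (Suc k) [La] = fib_iter k [La] @ fib_iter k [Lb]"
proof -
  have "fib_word [La] = [La] @ [Lb]" by (simp add: fib_word_def)
  then show ?thesis using fib_iter_append[of k "[La]" "[Lb]"] by (simp only: fib_iter_Suc)
qed

lemma fib_iter_Suc_Lb: "fib_iter (Suc k) [Lb] = fib_iter k [La]"
proof -
  have "fib_word [Lb] = [La]" by (simp add: fib_word_def)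
  then show ?thesis by (simp only: fib_iter_Suc)
qed

lemma length_fib_word: "length (fib_word w) \<ge> length w"
proof (induction w)
  case (Cons a w)
  then show ?case by (cases a) (auto simp: fib_word_def)
qed (simp add: fib_word_def)

lemma length_fib_iter: "length (fib_iter k w) \<ge> length w"
  by (induction k) (auto intro: order_trans[OF _ length_fib_word])

lemma length_fib_iter_La: "length (fib_iter k [La]) \<ge> k + 1"
proof (induction k)
  case (Suc k)
  have "length (fib_iter k [Lb]) \<ge> 1" using length_fib_iter[where k=k and w="[Lb]"] by simp
  then show ?case using Suc unfolding fib_iter_Suc_La by simp
qed simp

lemma fib_iter_mono: "sublist (fib_iter k [La]) (fib_iter (k + d) [La])"
proof (induction d)
  case (Suc d)
  have "sublist (fib_iter (k + d) [La]) (fib_iter (Suc (k + d)) [La])"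
    unfolding fib_iter_Suc_La by simp
  then show ?case using Suc by (auto intro: sublist_order.order_trans)
qed simp

lemma fib_iter_c: "sublist (fib_iter m [c]) (fib_iter (Suc m) [La])"
  unfolding fib_iter_Suc_La by (cases c) auto

definition legal :: "letter list \<Rightarrow> bool" where
  "legal w \<longleftrightarrow> (\<exists>k c. sublist w (fib_iter k [c]))"

lemma legal_sub: "sublist v w \<Longrightarrow> legal w \<Longrightarrow> legal v"
  unfolding legal_def by (auto intro: sublist_order.order_trans)

lemma legal_eventually: 
  assumes "legal w" shows "\<exists>K. \<forall>k\<ge>K. sublist w (fib_iter k [La])"
proof -
  obtain m c where "sublist w (fib_iter m [c])" using assms legal_def by auto
  then have s: "sublist w (fib_iter (Suc m) [La])" using fib_iter_c sublist_order.order_trans by blast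
  show ?thesis
  proof (intro exI allI impI)
    fix k assume "k \<ge> Suc m"
    then obtain d where "k = Suc m + d" using le_Suc_ex by blast
    then show "sublist w (fib_iter k [La])" using s fib_iter_mono sublist_order.order_trans by metis
  qed
qed

lemma double_legal: "sublist (fib_iter k [La] @ fib_iter k [La]) (fib_iter (k + 3) [La])"
proof -
  have "fib_iter 3 [La] = [La, Lb] @ ([La] @ [La]) @ [Lb]"
    by (simp add: numeral_3_eq_3 fib_word_def)
  then have "fib_iter (k + 3) [La] = fib_iter k [La, Lb] @ (fib_iter k [La] @ fib_iter k [La]) @ fib_iter k [Lb]"
    by (simp only: funpow_add comp_def fib_iter_append)
  then show ?thesis by (metis append.assoc sublist_appendI)
qed

definition cwin :: "nat \<Rightarrow> config \<Rightarrow> letter list" where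
  "cwin N \<zeta> = subword_at \<zeta> (- int N) (2 * N + 1)"

lemma subword_in_cwin:
  assumes "- int N \<le> m" "m + int n \<le> int N + 1"
  shows "subword_at \<zeta> m n = take n (drop (nat (m + int N)) (cwin N \<zeta>))"
proof (rule nth_equalityI)
  show "length (subword_at \<zeta> m n) = length (take n (drop (nat (m + int N)) (cwin N \<zeta>)))"
    using assms by (simp add: subword_at_def cwin_def)
  fix i assume "i < length (subword_at \<zeta> m n)"
  then have i: "i < n" by (simp add: subword_at_def)
  have l: "nat (m + int N) + i < 2 * N + 1" using assms i by linarith
  have "take n (drop (nat (m + int N)) (cwin N \<zeta>)) ! i = cwin N \<zeta> ! (nat (m + int N) + i)"
    using i l by (simp add: cwin_def subword_at_def del: upt_Suc)
  also have "\<dots> = \<zeta> (- int N + int (nat (m + int N) + i))"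
    using l by (simp add: cwin_def subword_at_def del: upt_Suc)
  also have "- int N + int (nat (m + int N) + i) = m + int i" using assms by simp
  finally show "subword_at \<zeta> m n ! i = take n (drop (nat (m + int N)) (cwin N \<zeta>)) ! i"
    using i by (simp add: subword_at_def del: upt_Suc)
qed

lemma sublist_cwin:
  assumes "- int N \<le> m" "m + int n \<le> int N + 1"
  shows "sublist (subword_at \<zeta> m n) (cwin N \<zeta>)"
  unfolding subword_in_cwin[OF assms] by (meson sublist_drop sublist_take sublist_order.order_trans)

lemma cwin_mono: "N \<le> M \<Longrightarrow> sublist (cwin N \<zeta>) (cwin M \<zeta>)"
proof -
  assume "N \<le> M"
  then have "sublist (subword_at \<zeta> (- int N) (2 * N + 1)) (cwin M \<zeta>)" by (intro sublist_cwin) auto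
  then show ?thesis by (simp add: cwin_def)
qed

lemma Fib_cwin: "\<xi> \<in> Fib_subshift \<longleftrightarrow> (\<forall>N. legal (cwin N \<xi>))"
proof
  assume "\<xi> \<in> Fib_subshift"
  then show "\<forall>N. legal (cwin N \<xi>)" by (auto simp: Fib_subshift_def legal_def cwin_def)
next
  assume H: "\<forall>N. legal (cwin N \<xi>)"
  show "\<xi> \<in> Fib_subshift"
    unfolding Fib_subshift_def
  proof (intro CollectI allI)
    fix m n
    let ?N = "nat \<bar>m\<bar> + n"
    have "sublist (subword_at \<xi> m n) (cwin ?N \<xi>)" by (rule sublist_cwin) auto
    then have "legal (subword_at \<xi> m n)" using H legal_sub by blast
    then show "\<exists>k c. sublist (subword_at \<xi> m n) (fib_iter k [c])" by (simp add: legal_def)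
  qed
qed

lemma topspace_config[simp]: "topspace config_top = UNIV"
  by (simp add: config_top_def)

definition cyl :: "nat \<Rightarrow> config \<Rightarrow> config set" where
  "cyl N \<xi> = {\<zeta>. \<forall>j. - int N \<le> j \<and> j \<le> int N \<longrightarrow> \<zeta> j = \<xi> j}"

lemma cyl_open: "openin config_top (cyl N \<xi>)"
proof -
  let ?X = "\<lambda>j. if - int N \<le> j \<and> j \<le> int N then {\<xi> j} else UNIV"
  have "cyl N \<xi> = (\<Pi>\<^sub>E j\<in>UNIV. ?X j)"
    by (auto simp: cyl_def PiE_UNIV_domain split: if_splits)
  moreover have "openin config_top (\<Pi>\<^sub>E j\<in>UNIV. ?X j)"
    unfolding config_top_def
  proof (rule product_topology_basis)
    show "finite {i. ?X i \<noteq> topspace (discrete_topology UNIV)}"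
      by (rule finite_subset[of _ "{- int N..int N}"]) auto
  qed auto
  ultimately show ?thesis by simp
qed

lemma cyl_cwin: "\<zeta> \<in> cyl N \<xi> \<Longrightarrow> cwin N \<zeta> = cwin N \<xi>"
  by (auto simp: cyl_def cwin_def subword_at_def)

definition W :: "nat \<Rightarrow> config set" where
  "W N = {\<zeta>. \<not> legal (cwin N \<zeta>)}"

lemma W_open: "openin config_top (W N)"
proof -
  have "W N = \<Union> (cyl N ` W N)"
    by (auto simp: W_def cyl_cwin) (auto simp: cyl_def)
  then show ?thesis using cyl_open by (metis imageE openin_Union)
qed

lemma W_mono: "N \<le> M \<Longrightarrow> W N \<subseteq> W M"
  unfolding W_def using cwin_mono legal_sub by blast

lemma Fib_compl: "UNIV - Fib_subshift = (\<Union>N. W N)"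
  by (auto simp: W_def Fib_cwin)

lemma Fib_closed: "closedin config_top Fib_subshift"
  unfolding closedin_def using Fib_compl W_open by auto

lemma finite_letter: "finite (UNIV :: letter set)"
proof -
  have "(UNIV :: letter set) = {La, Lb}" by (auto intro: letter.exhaust)
  then show ?thesis by (metis finite.emptyI finite_insert)
qed

lemma config_compact: "compact_space config_top"
  unfolding config_top_def
  by (simp add: compact_space_product_topology compact_space_discrete_topology finite_letter)

lemma avoid_N:
  assumes "closedin config_top F" "F \<inter> Fib_subshift = {}"
  shows "\<exists>N. F \<subseteq> W N"
proof -
  have c: "compactin config_top F" using closedin_compact_space[OF config_compact assms(1)] .
  have "F \<subseteq> \<Union> (range W)" using assms(2) Fib_compl by auto
  have ex: "\<exists>\<F>. finite \<F> \<and> \<F> \<subseteq> range W \<and> F \<subseteq> \<Union>\<F>"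
  proof -
    have "\<forall>\<U>. (\<forall>U\<in>\<U>. openin config_top U) \<and> F \<subseteq> \<Union>\<U> \<longrightarrow> (\<exists>\<F>. finite \<F> \<and> \<F> \<subseteq> \<U> \<and> F \<subseteq> \<Union>\<F>)"
      using c by (simp add: compactin_def)
    then have "(\<forall>U\<in>range W. openin config_top U) \<and> F \<subseteq> \<Union>(range W) \<longrightarrow> (\<exists>\<F>. finite \<F> \<and> \<F> \<subseteq> range W \<and> F \<subseteq> \<Union>\<F>)"
      by (rule spec)
    moreover have "\<forall>U\<in>range W. openin config_top U" using W_open by blast
    ultimately show "\<exists>\<F>. finite \<F> \<and> \<F> \<subseteq> range W \<and> F \<subseteq> \<Union>\<F>" using \<open>F \<subseteq> \<Union> (range W)\<close> by blast
  qed
  then obtain \<F> where F: "finite \<F>" "\<F> \<subseteq> range W" "F \<subseteq> \<Union>\<F>" by blast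
  then obtain S where S: "finite S" "\<F> = W ` S" by (meson finite_subset_image)
  have "\<forall>s\<in>S. W s \<subseteq> W (Max (insert 0 S))"
    using S(1) by (simp add: W_mono)
  then have "F \<subseteq> W (Max (insert 0 S))" using F(3) S(2) by blast
  then show ?thesis by blast
qed

lemma cyl_anti: "N \<le> M \<Longrightarrow> cyl M \<xi> \<subseteq> cyl N \<xi>"
  by (auto simp: cyl_def)

lemma nbhd_fin:
  assumes "finite \<F>" "\<F> \<subseteq> {{f. f i \<in> V} | i V. True}" "\<xi> \<in> \<Inter>\<F>"
  shows "\<exists>N. cyl N \<xi> \<subseteq> \<Inter>\<F>"
  using assms
proof (induction \<F> rule: finite_induct)
  case empty
  then show ?case by auto
next
  case (insert F \<F>)
  then obtain N where N: "cyl N \<xi> \<subseteq> \<Inter>\<F>" by auto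
  from insert obtain i V where F: "F = {f. f i \<in> V}" by auto
  let ?M = "max N (nat \<bar>i\<bar>)"
  have "cyl ?M \<xi> \<subseteq> \<Inter>\<F>" using N cyl_anti[of N ?M] by auto
  moreover have "cyl ?M \<xi> \<subseteq> F"
  proof
    fix \<zeta> assume "\<zeta> \<in> cyl ?M \<xi>"
    moreover have "\<bar>i\<bar> \<le> int ?M" by (simp add: of_nat_max)
    then have "- int ?M \<le> i \<and> i \<le> int ?M" by (simp add: abs_le_iff)
    ultimately have "\<zeta> i = \<xi> i" unfolding cyl_def by blast
    then show "\<zeta> \<in> F" using insert(5) F by auto
  qed
  ultimately show ?case by blast
qed

lemma nbhd:
  assumes "openin config_top U" "\<xi> \<in> U"
  shows "\<exists>N. cyl N \<xi> \<subseteq> U"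
  using assms unfolding config_top_def openin_product_topology union_of_def intersection_of_def relative_to_def arbitrary_def
proof (elim exE conjE)
  fix \<U> assume A: "\<xi> \<in> U" "\<U> \<subseteq> {T. \<exists>U. (\<exists>\<U>. finite \<U> \<and> \<U> \<subseteq> {{f. f i \<in> U} |i U.
                                i \<in> UNIV \<and> openin (discrete_topology UNIV) U} \<and> \<Inter> \<U> = U) \<and>
                      topspace (product_topology (\<lambda>_. discrete_topology (UNIV::letter set)) (UNIV::int set)) \<inter> U = T}"
     "\<Union> \<U> = U"
  then obtain T where T: "T \<in> \<U>" "\<xi> \<in> T" by auto
  from A(2) T(1) have "T \<in> {T. \<exists>U. (\<exists>\<U>. finite \<U> \<and> \<U> \<subseteq> {{f. f i \<in> U} |i U.
                                i \<in> UNIV \<and> openin (discrete_topology UNIV) U} \<and> \<Inter> \<U> = U) \<and>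
                      topspace (product_topology (\<lambda>_. discrete_topology (UNIV::letter set)) (UNIV::int set)) \<inter> U = T}"
    by (rule subsetD)
  then obtain V \<F> where F0: "finite \<F>" "\<F> \<subseteq> {{f. f i \<in> U} |i U.
                                i \<in> UNIV \<and> openin (discrete_topology UNIV) U}" "\<Inter>\<F> = V"
     "topspace (product_topology (\<lambda>_. discrete_topology (UNIV::letter set)) (UNIV::int set)) \<inter> V = T"
    by (elim CollectE exE conjE)
  have "topspace (product_topology (\<lambda>_. discrete_topology (UNIV::letter set)) (UNIV::int set)) = UNIV"
    using topspace_config by (simp add: config_top_def)
  then have F: "finite \<F>" "\<F> \<subseteq> {{f. f i \<in> U} |i U.
                                i \<in> UNIV \<and> openin (discrete_topology UNIV) U}" "T = \<Inter>\<F>"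
    using F0 by auto
  have "\<F> \<subseteq> {{f. f i \<in> V} | i V. True}" using F(2) by blast
  then obtain N where N: "cyl N \<xi> \<subseteq> \<Inter>\<F>" using nbhd_fin F(1) F(3) T(2) by blast
  have "T \<subseteq> U" using T(1) A(3) by blast
  then show ?thesis using N F(3) by blast
qed

lemma subword_shift_pow: "subword_at (shift_pow k \<eta>) m n = subword_at \<eta> (m - k) n"
  by (simp add: subword_at_def shift_pow_def algebra_simps)

lemma append_self_nth:
  assumes "j < 2 * length u" shows "(u @ u) ! j = u ! (j mod length u)"
proof (cases "j < length u")
  case True then show ?thesis by (simp add: nth_append)
next
  case False
  then have "j mod length u = j - length u" using assms
    by (metis le_mod_geq less_diff_conv2 mod_less mult_2 not_less)
  then show ?thesis using False by (simp add: nth_append)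
qed

lemma per_window:
  assumes "u \<noteq> []" "n \<le> length u"
  shows "sublist (subword_at (per_word u) m n) (u @ u)"
proof -
  let ?L = "length u"
  let ?r = "nat (m mod int ?L)"
  have L: "?L > 0" using assms by simp
  have r: "?r < ?L" using L by (simp add: nat_less_iff)
  have "subword_at (per_word u) m n = take n (drop ?r (u @ u))"
  proof (rule nth_equalityI)
    show "length (subword_at (per_word u) m n) = length (take n (drop ?r (u @ u)))"
      using r assms by (simp add: subword_at_def)
    fix i assume "i < length (subword_at (per_word u) m n)"
    then have i: "i < n" by (simp add: subword_at_def)
    have ri: "?r + i < 2 * ?L" using r i assms by linarith
    have "take n (drop ?r (u @ u)) ! i = drop ?r (u @ u) ! i" using i by (rule nth_take)
    also have "\<dots> = (u @ u) ! (?r + i)" by (rule nth_drop) (use r in simp)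
    also have "\<dots> = u ! ((?r + i) mod ?L)" using ri append_self_nth by blast
    also have "(?r + i) mod ?L = nat ((m + int i) mod int ?L)"
    proof -
      have "int ((?r + i) mod ?L) = (int ?r + int i) mod int ?L" by (simp add: of_nat_mod)
      also have "int ?r = m mod int ?L" using L by simp
      also have "(m mod int ?L + int i) mod int ?L = (m + int i) mod int ?L" by (simp add: mod_add_left_eq)
      finally show ?thesis by simp
    qed
    finally show "subword_at (per_word u) m n ! i = take n (drop ?r (u @ u)) ! i"
      using i by (simp add: subword_at_def per_word_def del: upt_Suc)
  qed
  then show ?thesis by (metis sublist_drop sublist_take sublist_order.order_trans)
qed

lemma shift_pow_mod:
  assumes "u \<noteq> []"
  shows "shift_pow n (per_word u) = shift_pow (n mod int (length u)) (per_word u)"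
proof
  fix j
  have "(j - n) mod int (length u) = (j - n mod int (length u)) mod int (length u)"
    by (simp add: mod_diff_right_eq)
  then show "shift_pow n (per_word u) j = shift_pow (n mod int (length u)) (per_word u) j"
    by (simp add: shift_pow_def per_word_def)
qed

lemma Orb_finite:
  assumes "u \<noteq> []" shows "finite (Orb (per_word u))"
proof -
  have "Orb (per_word u) \<subseteq> (\<lambda>n. shift_pow n (per_word u)) ` {0..<int (length u)}"
  proof
    fix x assume "x \<in> Orb (per_word u)"
    then obtain n where "x = shift_pow n (per_word u)" by (auto simp: Orb_def)
    then have "x = shift_pow (n mod int (length u)) (per_word u)" using shift_pow_mod[OF assms] by simp
    moreover have "n mod int (length u) \<in> {0..<int (length u)}" using assms by simp
    ultimately show "x \<in> (\<lambda>n. shift_pow n (per_word u)) ` {0..<int (length u)}" by blast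
  qed
  then show ?thesis by (rule finite_subset) simp
qed

lemma shift_shift_pow: "shift (shift_pow n \<eta>) = shift_pow (n + 1) \<eta>"
  by (simp add: shift_def shift_pow_def algebra_simps)

lemma shift_Orb: "shift ` Orb \<eta> = Orb \<eta>"
proof
  show "shift ` Orb \<eta> \<subseteq> Orb \<eta>" by (auto simp: Orb_def shift_shift_pow)
  show "Orb \<eta> \<subseteq> shift ` Orb \<eta>"
  proof
    fix x assume "x \<in> Orb \<eta>"
    then obtain n where "x = shift_pow n \<eta>" by (auto simp: Orb_def)
    then have "x = shift (shift_pow (n - 1) \<eta>)" by (simp add: shift_shift_pow)
    then show "x \<in> shift ` Orb \<eta>" by (auto simp: Orb_def)
  qed
qed

lemma config_t1: "t1_space config_top"
  unfolding config_top_def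
  by (intro Hausdorff_imp_t1_space) (simp add: Hausdorff_space_product_topology)

lemma Orb_subshift:
  assumes "u \<noteq> []" shows "is_subshift (Orb (per_word u))"
  unfolding is_subshift_def
proof (intro conjI)
  show "Orb (per_word u) \<noteq> {}" by (simp add: Orb_def)
  show "closedin config_top (Orb (per_word u))"
    using config_t1 Orb_finite[OF assms] by (simp add: t1_space_closedin_finite)
  show "shift ` Orb (per_word u) = Orb (per_word u)" by (rule shift_Orb)
qed

lemma shift_Fib: "shift ` Fib_subshift = Fib_subshift"
proof -
  have s1: "subword_at (shift \<xi>) m n = subword_at \<xi> (m - 1) n" for \<xi> m n
    by (simp add: subword_at_def shift_def algebra_simps)
  have s2: "subword_at (shift_pow (-1) \<xi>) m n = subword_at \<xi> (m + 1) n" for \<xi> m n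
    by (simp add: subword_shift_pow)
  have a: "shift \<xi> \<in> Fib_subshift" if "\<xi> \<in> Fib_subshift" for \<xi>
    using that unfolding Fib_subshift_def by (simp add: s1)
  have b: "shift_pow (-1) \<xi> \<in> Fib_subshift" if "\<xi> \<in> Fib_subshift" for \<xi>
    using that unfolding Fib_subshift_def by (simp add: s2)
  have c: "\<xi> = shift (shift_pow (-1) \<xi>)" for \<xi>
    by (simp add: shift_def shift_pow_def)
  show ?thesis using a b c by blast
qed

lemma fib_ne: "fib_iter k [La] \<noteq> []"
  using length_fib_iter_La[of k] by auto

lemma avoid_a:
  assumes "closedin config_top F" "F \<inter> Fib_subshift = {}"
  shows "\<exists>K. \<forall>k\<ge>K. Orb (per_word (fib_iter k [La])) \<inter> F = {}"
proof -
  obtain N where N: "F \<subseteq> W N" using avoid_N[OF assms] by blast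
  have "Orb (per_word (fib_iter k [La])) \<inter> W N = {}" if k: "k \<ge> 2 * N + 1" for k
  proof -
    let ?u = "fib_iter k [La]"
    have len: "2 * N + 1 \<le> length ?u" using length_fib_iter_La[of k] k by linarith
    {
      fix x assume "x \<in> Orb (per_word ?u)"
      then obtain n where x: "x = shift_pow n (per_word ?u)" by (auto simp: Orb_def)
      have "cwin N x = subword_at (per_word ?u) (- int N - n) (2 * N + 1)"
        by (simp add: x cwin_def subword_shift_pow)
      then have "sublist (cwin N x) (?u @ ?u)" using per_window[OF fib_ne len] by simp
      then have "sublist (cwin N x) (fib_iter (k + 3) [La])"
        using double_legal sublist_order.order_trans by blast
      then have "legal (cwin N x)" unfolding legal_def by blast
      then have "x \<notin> W N" by (simp add: W_def)
    }
    then show ?thesis by blast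
  qed
  then show ?thesis using N by blast
qed

lemma meet_a:
  assumes "openin config_top U" "\<xi> \<in> U" "\<xi> \<in> Fib_subshift"
  shows "\<exists>K. \<forall>k\<ge>K. Orb (per_word (fib_iter k [La])) \<inter> U \<noteq> {}"
proof -
  obtain N where N: "cyl N \<xi> \<subseteq> U" using nbhd[OF assms(1,2)] by blast
  let ?w = "cwin N \<xi>"
  have "legal ?w" using assms(3) Fib_cwin by blast
  then obtain K where K: "\<forall>k\<ge>K. sublist ?w (fib_iter k [La])" using legal_eventually by blast
  have "Orb (per_word (fib_iter k [La])) \<inter> cyl N \<xi> \<noteq> {}" if k: "k \<ge> K" for k
  proof -
    let ?u = "fib_iter k [La]"
    obtain p s where u: "?u = p @ ?w @ s" using K k unfolding sublist_def by blast
    let ?z = "shift_pow (- int N - int (length p)) (per_word ?u)"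
    have "?z \<in> cyl N \<xi>"
      unfolding cyl_def
    proof (intro CollectI allI impI)
      fix j assume j: "- int N \<le> j \<and> j \<le> int N"
      define t where "t = nat (j + int N)"
      have "j + int N < int (2 * N + 1)" using j by simp
      then have t: "t < 2 * N + 1" using j by (simp add: t_def nat_less_iff)
      have lw: "length ?w = 2 * N + 1" by (simp add: cwin_def subword_at_def)
      have lu: "length ?u = length p + (2 * N + 1) + length s" using lw by (subst u) simp
      have e: "j - (- int N - int (length p)) = int (length p + t)" using j by (simp add: t_def)
      have "?z j = ?u ! (length p + t)"
        using lu t by (simp add: shift_pow_def per_word_def e nat_add_distrib del: upt_Suc)
      also have "\<dots> = ?w ! t" using t lw by (subst u) (simp add: nth_append)
      also have "\<dots> = \<xi> (- int N + int t)" using t by (simp add: cwin_def subword_at_def del: upt_Suc)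
      also have "- int N + int t = j" using j by (simp add: t_def)
      finally show "?z j = \<xi> j" .
    qed
    moreover have "?z \<in> Orb (per_word ?u)" by (simp add: Orb_def)
    ultimately show ?thesis by blast
  qed
  then show ?thesis using N by blast
qed

lemma Fib_nonempty: "Fib_subshift \<noteq> {}"
proof
  assume e: "Fib_subshift = {}"
  have "closedin config_top UNIV" using closedin_topspace[of config_top] by simp
  then obtain K where K: "\<forall>k\<ge>K. Orb (per_word (fib_iter k [La])) \<inter> UNIV = {}"
    using avoid_a[of UNIV] e by blast
  moreover have "Orb (per_word (fib_iter K [La])) \<noteq> {}" by (simp add: Orb_def)
  ultimately show False by auto
qed

lemma Fib_is_subshift: "is_subshift Fib_subshift"
  unfolding is_subshift_def using Fib_nonempty Fib_closed shift_Fib by blast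

lemma gen_lemma:
  assumes "generate_topology_on vietoris_basis V" "Fib_subshift \<in> V"
  and sub: "\<forall>\<^sub>F k in sequentially. is_subshift (f k)"
  and meet: "\<And>U \<xi>. openin config_top U \<Longrightarrow> \<xi> \<in> U \<Longrightarrow> \<xi> \<in> Fib_subshift \<Longrightarrow> \<forall>\<^sub>F k in sequentially. f k \<inter> U \<noteq> {}"
  and avoid: "\<And>F. closedin config_top F \<Longrightarrow> F \<inter> Fib_subshift = {} \<Longrightarrow> \<forall>\<^sub>F k in sequentially. f k \<inter> F = {}"
  shows "\<forall>\<^sub>F k in sequentially. f k \<in> V"
  using assms(1,2)
proof (induction rule: generate_topology_on.induct)
  case Empty
  then show ?case by simp
next
  case (Int a b)
  then show ?case by (simp add: eventually_conj)
next
  case (UN K)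
  then obtain k where k: "k \<in> K" "Fib_subshift \<in> k" by auto
  then have "\<forall>\<^sub>F n in sequentially. f n \<in> k" using UN by blast
  then show ?case by (rule eventually_mono) (use k in auto)
next
  case (Basis s)
  then obtain F Us where s: "s = {X. is_subshift X \<and> X \<inter> F = {} \<and> (\<forall>U\<in>Us. X \<inter> U \<noteq> {})}"
    and F: "closedin config_top F" and Us: "finite Us" "\<forall>U\<in>Us. openin config_top U"
    unfolding vietoris_basis_def by blast
  have X: "Fib_subshift \<inter> F = {}" "\<forall>U\<in>Us. Fib_subshift \<inter> U \<noteq> {}" using Basis(2) s by auto
  have e1: "\<forall>\<^sub>F k in sequentially. f k \<inter> F = {}" using avoid F X(1) by blast
  have e2: "\<forall>\<^sub>F k in sequentially. \<forall>U\<in>Us. f k \<inter> U \<noteq> {}"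
  proof (rule eventually_ball_finite[OF Us(1)], intro ballI)
    fix U assume U: "U \<in> Us"
    then obtain \<xi> where "\<xi> \<in> Fib_subshift" "\<xi> \<in> U" using X(2) by blast
    then show "\<forall>\<^sub>F k in sequentially. f k \<inter> U \<noteq> {}" using meet Us(2) U by blast
  qed
  show ?case using eventually_conj[OF sub eventually_conj[OF e1 e2]] unfolding s
    by (rule eventually_mono) auto
qed

lemma limit_gen:
  assumes sub: "\<forall>\<^sub>F k in sequentially. is_subshift (f k)"
  and meet: "\<And>U \<xi>. openin config_top U \<Longrightarrow> \<xi> \<in> U \<Longrightarrow> \<xi> \<in> Fib_subshift \<Longrightarrow> \<forall>\<^sub>F k in sequentially. f k \<inter> U \<noteq> {}"
  and avoid: "\<And>F. closedin config_top F \<Longrightarrow> F \<inter> Fib_subshift = {} \<Longrightarrow> \<forall>\<^sub>F k in sequentially. f k \<inter> F = {}"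
  shows "limitin vietoris_top f Fib_subshift sequentially"
  unfolding limitin_def
proof (intro conjI allI impI)
  let ?s = "{X. is_subshift X \<and> X \<inter> {} = {} \<and> (\<forall>U\<in>{}. X \<inter> U \<noteq> {})}"
  have "?s \<in> vietoris_basis" unfolding vietoris_basis_def
    by (rule CollectI, intro exI conjI) auto
  moreover have "Fib_subshift \<in> ?s" using Fib_is_subshift by simp
  ultimately show "Fib_subshift \<in> topspace vietoris_top"
    unfolding vietoris_top_def by auto
next
  fix U assume "openin vietoris_top U \<and> Fib_subshift \<in> U"
  then show "\<forall>\<^sub>F k in sequentially. f k \<in> U"
    unfolding vietoris_top_def openin_topology_generated_by_iff
    apply -
    apply (rule gen_lemma[where f=f])
        apply blast
       apply blast
      apply (rule sub)
     apply (erule (2) meet)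
    apply (erule (1) avoid)
    done
qed

theorem proposition14:
  shows "periodically_approximable Fib_subshift
    \<and> limitin vietoris_top (\<lambda>k. Orb (per_word (fib_iter k [La]))) Fib_subshift sequentially
    \<and> limitin vietoris_top (\<lambda>k. Orb (per_word (fib_iter k [Lb]))) Fib_subshift sequentially"
proof -
  have la: "limitin vietoris_top (\<lambda>k. Orb (per_word (fib_iter k [La]))) Fib_subshift sequentially"
  proof (rule limit_gen)
    show "\<forall>\<^sub>F k in sequentially. is_subshift (Orb (per_word (fib_iter k [La])))"
      using Orb_subshift fib_ne by simp
    show "\<forall>\<^sub>F k in sequentially. Orb (per_word (fib_iter k [La])) \<inter> U \<noteq> {}"
      if "openin config_top U" "\<xi> \<in> U" "\<xi> \<in> Fib_subshift" for U \<xi>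
      using meet_a[OF that] unfolding eventually_sequentially .
    show "\<forall>\<^sub>F k in sequentially. Orb (per_word (fib_iter k [La])) \<inter> F = {}"
      if "closedin config_top F" "F \<inter> Fib_subshift = {}" for F
      using avoid_a[OF that] unfolding eventually_sequentially .
  qed
  have shiftb: "\<forall>\<^sub>F k in sequentially. P (fib_iter k [La]) \<Longrightarrow> \<forall>\<^sub>F k in sequentially. P (fib_iter k [Lb])" for P
  proof -
    assume "\<forall>\<^sub>F k in sequentially. P (fib_iter k [La])"
    then obtain K where K: "\<forall>k\<ge>K. P (fib_iter k [La])" unfolding eventually_sequentially by blast
    have "\<forall>k\<ge>Suc K. P (fib_iter k [Lb])"
    proof (intro allI impI)
      fix k assume "k \<ge> Suc K"
      then obtain k' where k': "k = Suc k'" "k' \<ge> K" by (cases k) auto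
      then show "P (fib_iter k [Lb])" using K by (simp only: fib_iter_Suc_Lb)
    qed
    then show ?thesis unfolding eventually_sequentially by blast
  qed
  have lb: "limitin vietoris_top (\<lambda>k. Orb (per_word (fib_iter k [Lb]))) Fib_subshift sequentially"
  proof (rule limit_gen)
    show "\<forall>\<^sub>F k in sequentially. is_subshift (Orb (per_word (fib_iter k [Lb])))"
      by (rule shiftb) (use Orb_subshift fib_ne in simp)
    show "\<forall>\<^sub>F k in sequentially. Orb (per_word (fib_iter k [Lb])) \<inter> U \<noteq> {}"
      if "openin config_top U" "\<xi> \<in> U" "\<xi> \<in> Fib_subshift" for U \<xi>
      by (rule shiftb) (use meet_a[OF that] in \<open>unfold eventually_sequentially\<close>)
    show "\<forall>\<^sub>F k in sequentially. Orb (per_word (fib_iter k [Lb])) \<inter> F = {}"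
      if "closedin config_top F" "F \<inter> Fib_subshift = {}" for F
      by (rule shiftb) (use avoid_a[OF that] in \<open>unfold eventually_sequentially\<close>)
  qed
  have "periodic_config (per_word (fib_iter n [La]))" for n
  proof -
    let ?u = "fib_iter n [La]"
    have "int (length ?u) > 0" using fib_ne[of n] by simp
    moreover have "\<forall>j. per_word ?u (j + int (length ?u)) = per_word ?u j"
      by (simp add: per_word_def)
    ultimately show ?thesis unfolding periodic_config_def by blast
  qed
  then have "periodically_approximable Fib_subshift"
    unfolding periodically_approximable_def
    by (intro exI[of _ "\<lambda>n. per_word (fib_iter n [La])"] conjI allI) (use la in auto)
  then show ?thesis using la lb by blast
qed

end
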